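(* Let $(r_t)_{t\ge0}$ and $(\delta_t)_{t\ge0}$ be sequences of non-negative real numbers, and let $g>1$ and $N\ge0$. Suppose that $r_t\le g\,\delta_t-\delta_{t+1}+N$ for all $t\ge0$. Then for every $T\ge1$, $$\min_{0\le t\le T-1}r_t\le\frac{g^T}{T}\delta_0+N.$$ *)

theory Defs
  imports Complex_Main
begin

end

theory Submission
  imports Defs
begin

lemma aux:
  fixes \<delta> :: "nat \<Rightarrow> real" and g c :: real
  assumes "g \<ge> 0" and "\<And>t. t < n \<Longrightarrow> c \<le> g * \<delta> t - \<delta> (Suc t)"
  shows "c * (\<Sum>k<n. g ^ k) \<le> g ^ n * \<delta> 0 - \<delta> n"
  using assms(2)
proof (induction n)
  case 0 then show ?case by simp
next
  case (Suc n)
  have IH: "c * (\<Sum>k<n. g ^ k) \<le> g ^ n * \<delta> 0 - \<delta> n" using Suc by simp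
  have st: "c \<le> g * \<delta> n - \<delta> (Suc n)" using Suc.prems by simp
  have "(\<Sum>k<Suc n. g ^ k) = g * (\<Sum>k<n. g ^ k) + 1"
    by (subst sum.lessThan_Suc_shift) (simp add: sum_distrib_left del: sum.lessThan_Suc)
  hence "c * (\<Sum>k<Suc n. g ^ k) = g * (c * (\<Sum>k<n. g ^ k)) + c" by (simp add: algebra_simps)
  also have "\<dots> \<le> g * (g ^ n * \<delta> 0 - \<delta> n) + c"
    using IH assms(1) mult_left_mono by auto
  also have "\<dots> \<le> g ^ Suc n * \<delta> 0 - \<delta> (Suc n)" using st by (simp add: algebra_simps)
  finally show ?case .
qed

theorem lemmaA8:
  fixes r \<delta> :: "nat \<Rightarrow> real" and g N :: real and T :: nat
  assumes r_nonneg: "\<And>t. r t \<ge> 0"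
    and \<delta>_nonneg: "\<And>t. \<delta> t \<ge> 0"
    and g_gt: "g > 1"
    and N_nonneg: "N \<ge> 0"
    and rec: "\<And>t. r t \<le> g * \<delta> t - \<delta> (Suc t) + N"
    and T_ge: "T \<ge> 1"
  shows "Min (r ` {0..T-1}) \<le> g ^ T / real T * \<delta> 0 + N"
proof -
  define m where "m = Min (r ` {0..T-1})"
  define c where "c = m - N"
  have mle: "m \<le> r t" if "t < T" for t
    unfolding m_def using that by (intro Min_le) auto
  have "\<And>t. t < T \<Longrightarrow> c \<le> g * \<delta> t - \<delta> (Suc t)"
    using mle rec unfolding c_def by (smt (verit))
  hence A: "c * (\<Sum>k<T. g ^ k) \<le> g ^ T * \<delta> 0 - \<delta> T"
    using aux[of g T c \<delta>] g_gt by simp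
  show ?thesis
  proof (cases "c \<le> 0")
    case True
    have "g ^ T / real T * \<delta> 0 \<ge> 0" using g_gt \<delta>_nonneg by simp
    then show ?thesis using True unfolding c_def m_def by linarith
  next
    case False
    have "(\<Sum>k<T. (1::real)) \<le> (\<Sum>k<T. g ^ k)"
      by (intro sum_mono) (use g_gt in auto)
    hence "real T \<le> (\<Sum>k<T. g ^ k)" by simp
    hence "c * real T \<le> c * (\<Sum>k<T. g ^ k)" using False by (intro mult_left_mono) auto
    also have "\<dots> \<le> g ^ T * \<delta> 0" using A \<delta>_nonneg[of T] by linarith
    finally have "c \<le> g ^ T * \<delta> 0 / real T" using T_ge by (simp add: field_simps)
    then show ?thesis unfolding c_def m_def by simp
  qed
qed

end
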